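(* Let $G$ be a joint distribution of $(v,k)$ on $V\times K=[0,1]\times(0,1]$ with strictly positive density $g$, and suppose $G$ satisfies Condition B. Then the mechanism $$\big(f(v,k),p(v,k)\big)=\begin{cases}(0,0,0) & \text{if } v\le \phi_k^{-1}(0),\\ \big(k,1,\phi_k^{-1}(0)\big) & \text{otherwise}\end{cases}$$ is optimal, i.e., it is incentive compatible and individually rational, and its expected revenue $\int_{V\times K}p\,dG$ is at least that of every other incentive compatible and individually rational mechanism.
   Context: A seller has one unit each of two divisible goods. An agent has private type $(v,k)\in V\times K$, $V=[0,1]$, $K=(0,1]$, and from an outcome $(a_1,a_2,t)$ with $a_1,a_2\in[0,1]$ (quantities of good 1 and good 2) and $t\in\mathbb{R}$ (payment by the agent) gets utility $U_{(v,k)}(a_1,a_2,t)=v\min\{a_1/k,a_2\}-t$. A (direct) mechanism is a pair $(f,p)$ with $f=(f_1,f_2):V\times K\to[0,1]^2$ and $p:V\times K\to\mathbb{R}$. It is incentive compatible (IC) if $U_{(v,k)}(f(v,k),p(v,k))\ge U_{(v,k)}(f(v',k'),p(v',k'))$ for all types $(v,k),(v',k')$, and individually rational (IR) if $U_{(v,k)}(f(v,k),p(v,k))\ge 0$ for all $(v,k)$. The type is distributed according to $G$ with strictly positive density $g$; $g_k$ is the marginal density of $k$, and $G(v|k)$, $g(v|k)$ are the conditional distribution and density of $v$ given $k$. Define $\phi(v,k)=v-\frac{1-G(v|k)}{g(v|k)}$. $G$ satisfies Condition A if for every $k$, $v\mapsto v(1-G(v|k))$ is strictly concave on $[0,1]$;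 under Condition A, for each $k$ there is a unique $v\in(0,1)$ with $\phi(v,k)=0$, denoted $\phi_k^{-1}(0)$. $G$ satisfies Condition B if it satisfies Condition A and for all $k<k'$ in $K$: $\frac{k}{k'}\phi_{k'}^{-1}(0)\le \phi_k^{-1}(0)\le \phi_{k'}^{-1}(0)$. *)

theory Defs
  imports "HOL-Analysis.Analysis"
begin

definition typespace :: "(real \<times> real) set" where
  "typespace = {0..1} \<times> {0<..1}"

definition utility :: "real \<times> real \<Rightarrow> real \<times> real \<Rightarrow> real \<Rightarrow> real" where
  "utility vk a t = fst vk * min (fst a / snd vk) (snd a) - t"

definition is_density :: "(real \<times> real \<Rightarrow> real) \<Rightarrow> bool" where
  "is_density g \<longleftrightarrow> continuous_on typespace g \<and> (\<forall>x\<in>typespace. 0 < g x)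
     \<and> set_integrable lborel typespace g \<and> (LINT x:typespace|lborel. g x) = 1"

definition marg_k :: "(real \<times> real \<Rightarrow> real) \<Rightarrow> real \<Rightarrow> real" where
  "marg_k g k = (LINT u:{0..1}|lborel. g (u, k))"

definition cond_cdf :: "(real \<times> real \<Rightarrow> real) \<Rightarrow> real \<Rightarrow> real \<Rightarrow> real" where
  "cond_cdf g v k = (LINT u:{0..v}|lborel. g (u, k)) / marg_k g k"

definition cond_dens :: "(real \<times> real \<Rightarrow> real) \<Rightarrow> real \<Rightarrow> real \<Rightarrow> real" where
  "cond_dens g v k = g (v, k) / marg_k g k"

definition phi :: "(real \<times> real \<Rightarrow> real) \<Rightarrow> real \<Rightarrow> real \<Rightarrow> real" where
  "phi g v k = v - (1 - cond_cdf g v k) / cond_dens g v k"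

definition strictly_concave_on :: "real set \<Rightarrow> (real \<Rightarrow> real) \<Rightarrow> bool" where
  "strictly_concave_on S h \<longleftrightarrow> convex S \<and> (\<forall>x\<in>S. \<forall>y\<in>S. \<forall>t. x \<noteq> y \<and> 0 < t \<and> t < 1 \<longrightarrow>
      t * h x + (1 - t) * h y < h (t * x + (1 - t) * y))"

definition conditionA :: "(real \<times> real \<Rightarrow> real) \<Rightarrow> bool" where
  "conditionA g \<longleftrightarrow> (\<forall>k\<in>{0<..1}. strictly_concave_on {0..1} (\<lambda>v. v * (1 - cond_cdf g v k)))"

definition phi_inv0 :: "(real \<times> real \<Rightarrow> real) \<Rightarrow> real \<Rightarrow> real" where
  "phi_inv0 g k = (THE v. v \<in> {0<..<1} \<and> phi g v k = 0)"

definition conditionB :: "(real \<times> real \<Rightarrow> real) \<Rightarrow> bool" where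
  "conditionB g \<longleftrightarrow> conditionA g \<and>
     (\<forall>k\<in>{0<..1}. \<forall>k'\<in>{0<..1}. k < k' \<longrightarrow>
        k / k' * phi_inv0 g k' \<le> phi_inv0 g k \<and> phi_inv0 g k \<le> phi_inv0 g k')"

definition feasible :: "(real \<times> real \<Rightarrow> real \<times> real) \<Rightarrow> bool" where
  "feasible f \<longleftrightarrow> (\<forall>x\<in>typespace. fst (f x) \<in> {0..1} \<and> snd (f x) \<in> {0..1})"

definition IC :: "(real \<times> real \<Rightarrow> real \<times> real) \<Rightarrow> (real \<times> real \<Rightarrow> real) \<Rightarrow> bool" where
  "IC f p \<longleftrightarrow> (\<forall>x\<in>typespace. \<forall>y\<in>typespace. utility x (f y) (p y) \<le> utility x (f x) (p x))"

definition IR :: "(real \<times> real \<Rightarrow> real \<times> real) \<Rightarrow> (real \<times> real \<Rightarrow> real) \<Rightarrow> bool" where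
  "IR f p \<longleftrightarrow> (\<forall>x\<in>typespace. 0 \<le> utility x (f x) (p x))"

definition revenue :: "(real \<times> real \<Rightarrow> real) \<Rightarrow> (real \<times> real \<Rightarrow> real) \<Rightarrow> real" where
  "revenue g p = (LINT x:typespace|lborel. p x * g x)"

definition f_opt :: "(real \<times> real \<Rightarrow> real) \<Rightarrow> real \<times> real \<Rightarrow> real \<times> real" where
  "f_opt g x = (if fst x \<le> phi_inv0 g (snd x) then (0, 0) else (snd x, 1))"

definition p_opt :: "(real \<times> real \<Rightarrow> real) \<Rightarrow> real \<times> real \<Rightarrow> real" where
  "p_opt g x = (if fst x \<le> phi_inv0 g (snd x) then 0 else phi_inv0 g (snd x))"

end

theory Submission
  imports Defs
begin


lemma ind_int:
  fixes f :: "real \<Rightarrow> real"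
  assumes fc: "continuous_on {0..1} f" and "0 \<le> a" "a \<le> b" "b \<le> 1"
  shows "(\<lambda>v. indicator {a..b} v * f v) integrable_on {0..1}"
    and "integral {0..1} (\<lambda>v. indicator {a..b} v * f v) = integral {a..b} f"
proof -
  have eq: "(\<lambda>v. indicator {a..b} v * f v) = (\<lambda>v. if v \<in> {a..b} then f v else 0)"
    by (auto simp: indicator_def)
  have sub: "{a..b} \<inter> {0..1} = {a..b}" using assms by auto
  have "f integrable_on {a..b}"
    by (rule integrable_continuous_interval, rule continuous_on_subset[OF fc]) (use assms in auto)
  then show "(\<lambda>v. indicator {a..b} v * f v) integrable_on {0..1}"
    unfolding eq integrable_restrict_Int sub .
  show "integral {0..1} (\<lambda>v. indicator {a..b} v * f v) = integral {a..b} f"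
    unfolding eq integral_restrict_Int sub ..
qed

lemma slice_bound:
  fixes q t f :: "real \<Rightarrow> real" and Rs :: real
  assumes fc: "continuous_on {0..1} f"
    and fnn: "\<And>v. v \<in> {0..1} \<Longrightarrow> 0 \<le> f v"
    and q01: "\<And>v. v \<in> {0..1} \<Longrightarrow> 0 \<le> q v \<and> q v \<le> 1"
    and ic: "\<And>v w. v \<in> {0..1} \<Longrightarrow> w \<in> {0..1} \<Longrightarrow> v * q w - t w \<le> v * q v - t v"
    and ir0: "t 0 \<le> 0"
    and Rmax: "\<And>s. s \<in> {0..1} \<Longrightarrow> s * integral {s..1} f \<le> Rs"
    and tint: "(\<lambda>v. t v * f v) integrable_on {0..1}"
  shows "integral {0..1} (\<lambda>v. t v * f v) \<le> Rs"
proof -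
  obtain cB where cB: "cB \<in> {0..1}" "\<And>v. v \<in> {0..1} \<Longrightarrow> f v \<le> f cB"
    using continuous_attains_sup[OF compact_Icc _ fc] by fastforce
  define B where "B = f cB"
  have B0: "0 \<le> B" using fnn cB by (simp add: B_def)
  have fB: "\<And>v. v \<in> {0..1} \<Longrightarrow> f v \<le> B" using cB by (simp add: B_def)
  have Rs0: "0 \<le> Rs" using Rmax[of 0] by simp
  have mono: "q v \<le> q w" if "v \<in> {0..1}" "w \<in> {0..1}" "v \<le> w" for v w
  proof (cases "v = w")
    case False
    have "0 \<le> (w - v) * (q w - q v)"
      using ic[OF that(1,2)] ic[OF that(2,1)] by (simp add: algebra_simps)
    moreover have "w - v > 0" using False that by auto
    ultimately show ?thesis by (simp add: zero_le_mult_iff)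
  qed simp
  define X where "X = integral {0..1} (\<lambda>v. t v * f v)"
  have main: "X \<le> Rs + B / real n" if n0: "n > 0" for n :: nat
  proof -
    define w where "w i = real i / real n" for i :: nat
    define D where "D i = q (w (Suc i)) - q (w i)" for i
    define a where "a i = w (Suc i) * D i" for i
    define c where "c v = (\<Sum>i<n. a i * indicator {w (Suc i)..1} v)" for v
    define d where "d v = (\<Sum>i<n. D i * indicator {w i..w (Suc i)} v)" for v
    have w01: "w i \<in> {0..1}" if "i \<le> n" for i
      using that n0 by (auto simp: w_def field_simps)
    have wmono: "w i \<le> w j" if "i \<le> j" for i j
      using that n0 by (auto simp: w_def divide_right_mono)
    have w0: "w 0 = 0" and wn: "w n = 1" using n0 by (auto simp: w_def)
    have D0: "0 \<le> D i" if "i < n" for i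
      using mono[OF w01 w01 wmono] that unfolding D_def by auto
    have a0: "0 \<le> a i" if "i < n" for i
      using D0[OF that] w01[of "Suc i"] that unfolding a_def by auto
    have chain: "t (w j) \<le> (\<Sum>i<j. a i)" if "j \<le> n" for j
      using that
    proof (induction j)
      case 0 then show ?case using ir0 w0 by simp
    next
      case (Suc j)
      have "w (Suc j) * q (w j) - t (w j) \<le> w (Suc j) * q (w (Suc j)) - t (w (Suc j))"
        using ic[OF w01 w01] Suc.prems by simp
      then have "t (w (Suc j)) \<le> t (w j) + a j"
        unfolding a_def D_def by (simp add: algebra_simps)
      then show ?case using Suc by simp
    qed
    have claim: "t v \<le> c v + d v" if v: "v \<in> {0..1}" for v
    proof -
      define j where "j = nat \<lfloor>v * real n\<rfloor>"
      have fl0: "0 \<le> \<lfloor>v * real n\<rfloor>" using v by auto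
      have jr: "real j = of_int \<lfloor>v * real n\<rfloor>" using fl0 unfolding j_def by simp
      have "real j \<le> v * real n" using jr by linarith
      then have wj: "w j \<le> v" using n0 by (simp add: w_def divide_le_eq mult.commute)
      have "v * real n < real j + 1" using jr by linarith
      then have wj1: "v < w (Suc j)" using n0 by (simp add: w_def less_divide_eq mult.commute)
      have "v * real n \<le> real n" using v n0 by auto
      then have "real j \<le> real n" using jr by linarith
      then have jn: "j \<le> n" by simp
      have cge: "(\<Sum>i<j. a i) \<le> c v"
      proof -
        have "(\<Sum>i<j. a i) = (\<Sum>i<j. a i * indicator {w (Suc i)..1} v)"
        proof (rule sum.cong)
          fix i assume "i \<in> {..<j}"
          then have "w (Suc i) \<le> v" using wmono[of "Suc i" j] wj by auto
          then show "a i = a i * indicator {w (Suc i)..1} v" using v by auto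
        qed simp
        also have "\<dots> \<le> c v" unfolding c_def
          by (rule sum_mono2) (use jn a0 in auto)
        finally show ?thesis .
      qed
      have d0: "0 \<le> d v" unfolding d_def by (rule sum_nonneg) (use D0 in auto)
      show ?thesis
      proof (cases "j = n")
        case True
        then have "v = 1" using wj wn v by auto
        then have "t v \<le> (\<Sum>i<j. a i)" using chain[of n] True wn by simp
        then show ?thesis using cge d0 by linarith
      next
        case False
        then have jn': "j < n" using jn by auto
        have wjv: "w j \<in> {0..1}" using w01 jn by auto
        have "v * q (w j) - t (w j) \<le> v * q v - t v" using ic[OF v wjv] .
        then have t1: "t v \<le> t (w j) + v * (q v - q (w j))" by (simp add: algebra_simps)
        have qd1: "0 \<le> q v - q (w j)" using mono[OF wjv v wj] by simp
        have qd2: "q v - q (w j) \<le> D j"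
          using mono[OF v w01[of "Suc j"] ] wj1 jn' unfolding D_def by simp
        have "v * (q v - q (w j)) \<le> 1 * (q v - q (w j))"
          by (rule mult_right_mono) (use v qd1 in auto)
        then have t2: "v * (q v - q (w j)) \<le> D j" using qd2 by simp
        have "D j = D j * indicator {w j..w (Suc j)} v" using wj wj1 by auto
        also have "\<dots> \<le> d v" unfolding d_def
          by (rule member_le_sum[where f = "\<lambda>i. D i * indicator {w i..w (Suc i)} v"])
             (use jn' D0 in auto)
        finally show ?thesis using t1 t2 chain[OF jn] cge by linarith
      qed
    qed
    have eqfun: "(\<lambda>v. (c v + d v) * f v) = (\<lambda>v. \<Sum>i<n. a i * (indicator {w (Suc i)..1} v * f v)
         + D i * (indicator {w i..w (Suc i)} v * f v))"
      by (rule ext) (simp only: c_def d_def sum.distrib distrib_right sum_distrib_right mult.assoc)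
    have int1: "(\<lambda>v. indicator {w (Suc i)..1} v * f v) integrable_on {0..1}"
      and int1e: "integral {0..1} (\<lambda>v. indicator {w (Suc i)..1} v * f v) = integral {w (Suc i)..1} f"
      if "i < n" for i
      using ind_int[OF fc, of "w (Suc i)" 1] w01[of "Suc i"] that by auto
    have int2: "(\<lambda>v. indicator {w i..w (Suc i)} v * f v) integrable_on {0..1}"
      and int2e: "integral {0..1} (\<lambda>v. indicator {w i..w (Suc i)} v * f v) = integral {w i..w (Suc i)} f"
      if "i < n" for i
      using ind_int[OF fc, of "w i" "w (Suc i)"] w01[of "Suc i"] w01[of i] wmono[of i "Suc i"] that by auto
    have cm: "(\<lambda>x. cc * h x) integrable_on S" if "h integrable_on S" for cc and h :: "real \<Rightarrow> real" and S
      using integrable_cmul[OF that, of cc] by simp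
    have intS: "(\<lambda>v. (c v + d v) * f v) integrable_on {0..1}"
      unfolding eqfun
      by (intro integrable_sum integrable_add)
         (auto intro!: cm int1 int2)
    have "X \<le> integral {0..1} (\<lambda>v. (c v + d v) * f v)"
      unfolding X_def by (rule integral_le[OF tint intS]) (use claim fnn in \<open>auto intro: mult_right_mono\<close>)
    also have "\<dots> = (\<Sum>i<n. a i * integral {w (Suc i)..1} f + D i * integral {w i..w (Suc i)} f)"
      unfolding eqfun
      apply (subst integral_sum)
        apply simp
       apply (auto intro!: integrable_add cm int1 int2)[1]
      apply (rule sum.cong, simp)
      apply (subst integral_add)
        apply (auto intro!: cm int1 int2)[2]
      apply (simp only: integral_mult_right)
      using int1e int2e by simp
    also have "\<dots> \<le> (\<Sum>i<n. D i * Rs + D i * (B / real n))"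
    proof (rule sum_mono)
      fix i assume "i \<in> {..<n}"
      then have i: "i < n" by simp
      have wi: "w i \<le> w (Suc i)" using wmono by simp
      have "a i * integral {w (Suc i)..1} f = D i * (w (Suc i) * integral {w (Suc i)..1} f)"
        unfolding a_def by simp
      also have "\<dots> \<le> D i * Rs"
        by (rule mult_left_mono[OF Rmax D0[OF i]]) (use w01[of "Suc i"] i in auto)
      finally have 1: "a i * integral {w (Suc i)..1} f \<le> D i * Rs" .
      have fi: "f integrable_on {w i..w (Suc i)}"
        by (rule integrable_continuous_interval, rule continuous_on_subset[OF fc])
           (use w01[of i] w01[of "Suc i"] i in auto)
      have "integral {w i..w (Suc i)} f \<le> integral {w i..w (Suc i)} (\<lambda>_. B)"
        by (rule integral_le[OF fi]) (use fB w01[of i] w01[of "Suc i"] i in auto)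
      also have "\<dots> = B / real n"
        using wi n0 by (simp add: w_def field_simps)
      finally have "integral {w i..w (Suc i)} f \<le> B / real n" .
      then have 2: "D i * integral {w i..w (Suc i)} f \<le> D i * (B / real n)"
        by (rule mult_left_mono[OF _ D0[OF i]])
      show "a i * integral {w (Suc i)..1} f + D i * integral {w i..w (Suc i)} f
          \<le> D i * Rs + D i * (B / real n)" using 1 2 by linarith
    qed
    also have "\<dots> = (Rs + B / real n) * (\<Sum>i<n. D i)"
      by (simp add: sum.distrib sum_distrib_left[symmetric] sum_divide_distrib[symmetric] algebra_simps)
    also have "(\<Sum>i<n. D i) = q 1 - q 0"
      unfolding D_def using sum_lessThan_telescope[of "\<lambda>i. q (w i)" n] w0 wn by simp
    also have "(Rs + B / real n) * (q 1 - q 0) \<le> (Rs + B / real n) * 1"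
      by (rule mult_left_mono) (use q01[of 1] q01[of 0] Rs0 B0 in auto)
    finally show ?thesis by simp
  qed
  show ?thesis
  proof (rule ccontr)
    assume "\<not> ?thesis"
    then have gt: "X - Rs > 0" unfolding X_def by simp
    obtain n :: nat where n: "n > B / (X - Rs)" using reals_Archimedean2 by blast
    have n0: "n > 0" using n B0 gt
      by (metis divide_nonneg_pos not_gr0 not_le of_nat_0)
    have "B / (X - Rs) < real n" using n .
    then have "B < real n * (X - Rs)" using gt by (simp add: divide_less_eq)
    then have "B / real n < X - Rs" using n0 by (simp add: divide_less_eq mult.commute)
    then show False using main[OF n0] by linarith
  qed
qed


lemma mix01:
  fixes x y t :: real
  assumes "x \<in> {0..1}" "y \<in> {0..1}" "0 \<le> t" "t \<le> 1"
  shows "t * x + (1 - t) * y \<in> {0..1}"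
proof -
  have "t * x \<le> t * 1" using assms by (intro mult_left_mono) auto
  moreover have "(1 - t) * y \<le> (1 - t) * 1" using assms by (intro mult_left_mono) auto
  ultimately show ?thesis using assms by auto
qed

lemma monopoly:
  fixes f ph :: "real \<Rightarrow> real" and M :: real
  assumes fc: "continuous_on {0..1} f"
    and fpos: "\<And>v. v \<in> {0..1} \<Longrightarrow> 0 < f v"
    and Mdef: "M = integral {0..1} f"
    and conc: "strictly_concave_on {0..1} (\<lambda>v. v * (1 - integral {0..v} f / M))"
    and ph: "\<And>v. v \<in> {0..1} \<Longrightarrow> ph v = v - (1 - integral {0..v} f / M) / (f v / M)"
  shows "\<exists>r. r \<in> {0<..<1} \<and> ph r = 0 \<and> (\<forall>r'. r' \<in> {0<..<1} \<and> ph r' = 0 \<longrightarrow> r' = r)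
     \<and> (\<forall>s\<in>{0..1}. s * integral {s..1} f \<le> r * integral {r..1} f)"
proof -
  define F where "F v = integral {0..v} f" for v
  define R where "R v = v * (M - F v)" for v
  obtain cm where cm: "cm \<in> {0..1}" "\<And>v. v \<in> {0..1} \<Longrightarrow> f cm \<le> f v"
    using continuous_attains_inf[OF compact_Icc _ fc] by fastforce
  have fint: "f integrable_on {0..1}" by (rule integrable_continuous_interval[OF fc])
  have "integral {0..1} (\<lambda>_::real. f cm) \<le> integral {0..1} f"
    by (rule integral_le[OF _ fint]) (use cm in auto)
  then have Mpos: "M > 0" using fpos[OF cm(1)] Mdef by simp
  have Fd: "(F has_real_derivative f x) (at x within {0..1})" if "x \<in> {0..1}" for x
    unfolding F_def by (rule integral_has_real_derivative[OF fc that])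
  have Rd: "(R has_real_derivative (M - F x - x * f x)) (at x within {0..1})" if "x \<in> {0..1}" for x
    unfolding R_def
    by (rule derivative_eq_intros Fd[OF that] refl | simp)+
  have Rcont: "continuous_on {0..1} R" by (rule DERIV_continuous_on[OF Rd])
  have F1: "F 1 = M" using Mdef F_def by simp
  have F0: "F 0 = 0" by (simp add: F_def)
  have tail: "integral {s..1} f = M - F s" if "s \<in> {0..1}" for s
    using Henstock_Kurzweil_Integration.integral_combine[where a=0 and c=s and b=1 and f=f] that fint F1 unfolding F_def by auto
  define h where "h v = v * (1 - F v / M)" for v
  have Rh: "R v = M * h v" for v
    unfolding R_def h_def using Mpos by (simp add: field_simps)
  have Rstrict: "t * R x + (1 - t) * R y < R (t * x + (1 - t) * y)"
    if "x \<in> {0..1}" "y \<in> {0..1}" "x \<noteq> y" "0 < t" "t < 1" for x y t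
  proof -
    have "t * h x + (1 - t) * h y < h (t * x + (1 - t) * y)"
      using conc that unfolding strictly_concave_on_def F_def h_def by blast
    from mult_strict_left_mono[OF this Mpos] show ?thesis
      unfolding Rh by (simp add: distrib_left mult.left_commute)
  qed
  have Rconv: "convex_on {0..1} (\<lambda>x. - R x)"
    unfolding convex_on_def
  proof (intro conjI ballI allI impI)
    show "convex {0..1::real}" by simp
    fix x y u v :: real
    assume xy: "x \<in> {0..1}" "y \<in> {0..1}" and uv: "0 \<le> u" "0 \<le> v" "u + v = 1"
    show "- R (u *\<^sub>R x + v *\<^sub>R y) \<le> u * - R x + v * - R y"
    proof (cases "x = y \<or> u = 0 \<or> v = 0")
      case True
      then show ?thesis
      proof (elim disjE)
        assume "x = y" then show ?thesis using uv by (simp add: algebra_simps flip: distrib_right)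
      next
        assume "u = 0" then show ?thesis using uv by simp
      next
        assume "v = 0" then show ?thesis using uv by simp
      qed
    next
      case False
      then have "u * R x + (1 - u) * R y < R (u * x + (1 - u) * y)"
        using Rstrict[OF xy, of u] uv by auto
      moreover have "v = 1 - u" using uv by simp
      ultimately show ?thesis by simp
    qed
  qed
  obtain c where c: "c \<in> {0..1}" "\<And>s. s \<in> {0..1} \<Longrightarrow> R s \<le> R c"
    using continuous_attains_sup[OF compact_Icc _ Rcont] by fastforce
  have R0: "R 0 = 0" and R1: "R 1 = 0" using F0 F1 by (auto simp: R_def)
  have "(1/2) * R 0 + (1 - 1/2) * R 1 < R ((1/2) * 0 + (1 - 1/2) * 1)"
    by (rule Rstrict) auto
  then have "R (1/2) > 0" using R0 R1 by simp
  then have Rc: "R c > 0" using c(2)[of "1/2"] by simp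
  have c01: "c \<in> {0<..<1}" using c(1) Rc R0 R1
    by (metis atLeastAtMost_iff greaterThanLessThan_iff less_irrefl order_le_less)
  have atc: "at c within {0..1} = at c" using c01 by (intro at_within_Icc_at) auto
  have "M - F c - c * f c = 0"
  proof (rule DERIV_local_max)
    show "(R has_real_derivative (M - F c - c * f c)) (at c)" using Rd[OF c(1)] atc by simp
    show "0 < min c (1 - c)" using c01 by auto
    show "\<forall>y. \<bar>c - y\<bar> < min c (1 - c) \<longrightarrow> R y \<le> R c"
      using c(2) by (auto simp: abs_if split: if_splits)
  qed
  then have Rd0c: "M - F c = c * f c" by simp
  have phzero: "ph v = 0 \<longleftrightarrow> M - F v - v * f v = 0" if "v \<in> {0..1}" for v
  proof -
    have e: "(1 - F v / M) * M = M - F v" using Mpos by (simp add: algebra_simps)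
    have "(1 - F v / M) / (f v / M) = (1 - F v / M) * M / f v" by simp
    then have "ph v = v - (M - F v) / f v"
      using ph[OF that] e by (simp add: F_def)
    then show ?thesis using fpos[OF that] by (auto simp: field_simps)
  qed
  have maxat: "R s \<le> R r" if "r \<in> {0<..<1}" "M - F r - r * f r = 0" "s \<in> {0..1}" for r s
  proof -
    have rin: "r \<in> {0..1}" using that by auto
    have ri: "r \<in> interior {0..1::real}" using that by simp
    have dR: "((\<lambda>x. - R x) has_real_derivative - (M - F r - r * f r)) (at r within {0..1})"
      using Rd[OF rin] by (rule DERIV_minus)
    have "- (M - F r - r * f r) * (s - r) \<le> - R s - - R r"
      using convex_on_imp_above_tangent[OF Rconv _ ri that(3) dR] by simp
    then show ?thesis using that(2) by simp
  qed
  show ?thesis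
  proof (intro exI conjI allI impI ballI)
    show "c \<in> {0<..<1}" by fact
    show "ph c = 0" using phzero c(1) Rd0c by simp
    fix r' assume r': "r' \<in> {0<..<1} \<and> ph r' = 0"
    then have r'0: "M - F r' - r' * f r' = 0" using phzero[of r'] by auto
    have e1: "R c \<le> R r'" using maxat[OF _ r'0 c(1)] r' by auto
    have e2: "R r' \<le> R c" using c(2) r' by auto
    show "r' = c"
    proof (rule ccontr)
      assume ne: "r' \<noteq> c"
      have "(1/2) * R r' + (1 - 1/2) * R c < R ((1/2) * r' + (1 - 1/2) * c)"
        by (rule Rstrict) (use r' c(1) ne in auto)
      moreover have "R ((1/2) * r' + (1 - 1/2) * c) \<le> R c"
        by (rule c(2), rule mix01) (use r' c(1) in auto)
      ultimately show False using e1 e2 by simp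
    qed
  next
    fix s :: real assume s: "s \<in> {0..1}"
    show "s * integral {s..1} f \<le> c * integral {c..1} f"
      using c(2)[OF s] tail[OF s] tail[OF c(1)] by (simp add: R_def)
  qed
qed


lemma ic_core:
  fixes v k v' k' r r' :: real
  assumes "0 \<le> v" "0 < k" "0 < k'" "k \<le> k' \<Longrightarrow> r \<le> r'" "k' < k \<Longrightarrow> k' / k * r \<le> r'"
  shows "v * min (k' / k) 1 - r' \<le> (if v \<le> r then 0 else v - r)"
proof (cases "k \<le> k'")
  case True
  then have "k' / k \<ge> 1" using assms by simp
  then have "min (k'/k) 1 = 1" by simp
  then show ?thesis using assms True by auto
next
  case False
  then have lt: "k' < k" by simp
  define l where "l = k' / k"
  have l: "0 < l" "l < 1" using lt assms by (auto simp: l_def)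
  have "v * min (k'/k) 1 - r' \<le> l * (v - r)"
    using assms(5)[OF lt] l unfolding l_def[symmetric] by (simp add: algebra_simps)
  moreover have "l * (v - r) \<le> (if v \<le> r then 0 else v - r)"
  proof (cases "v \<le> r")
    case True then show ?thesis using l by (simp add: mult_nonneg_nonpos)
  next
    case False
    have "l * (v - r) \<le> 1 * (v - r)" by (rule mult_right_mono) (use l False in auto)
    then show ?thesis using False by simp
  qed
  ultimately show ?thesis by linarith
qed

lemma opt_IC_IR:
  assumes B: "conditionB g"
  shows "feasible (f_opt g) \<and> IC (f_opt g) (p_opt g) \<and> IR (f_opt g) (p_opt g)"
proof -
  have mon: "k \<le> k' \<Longrightarrow> phi_inv0 g k \<le> phi_inv0 g k'" if "k \<in> {0<..1}" "k' \<in> {0<..1}" for k k'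
    using B that unfolding conditionB_def by (cases "k = k'") auto
  have mon2: "k' < k \<Longrightarrow> k' / k * phi_inv0 g k \<le> phi_inv0 g k'" if "k \<in> {0<..1}" "k' \<in> {0<..1}" for k k'
    using B that unfolding conditionB_def by auto
  have own: "utility x (f_opt g x) (p_opt g x) = (if fst x \<le> phi_inv0 g (snd x) then 0 else fst x - phi_inv0 g (snd x))"
    if "x \<in> typespace" for x
    using that by (auto simp: utility_def f_opt_def p_opt_def typespace_def)
  show ?thesis
    unfolding feasible_def IC_def IR_def
  proof (intro conjI ballI)
    fix x assume "x \<in> typespace"
    then show "fst (f_opt g x) \<in> {0..1}" "snd (f_opt g x) \<in> {0..1}"
      by (auto simp: f_opt_def typespace_def)
  next
    fix x assume x: "x \<in> typespace"
    show "0 \<le> utility x (f_opt g x) (p_opt g x)" unfolding own[OF x] by auto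
  next
    fix x y assume x: "x \<in> typespace" and y: "y \<in> typespace"
    obtain v k where xv: "x = (v, k)" by force
    obtain v' k' where yv: "y = (v', k')" by force
    have k: "k \<in> {0<..1}" "0 \<le> v" using x xv by (auto simp: typespace_def)
    have k': "k' \<in> {0<..1}" using y yv by (auto simp: typespace_def)
    show "utility x (f_opt g y) (p_opt g y) \<le> utility x (f_opt g x) (p_opt g x)"
      unfolding own[OF x]
    proof (cases "v' \<le> phi_inv0 g k'")
      case True
      then show "utility x (f_opt g y) (p_opt g y) \<le> (if fst x \<le> phi_inv0 g (snd x) then 0 else fst x - phi_inv0 g (snd x))"
        by (auto simp: utility_def f_opt_def p_opt_def xv yv)
    next
      case False
      have "utility x (f_opt g y) (p_opt g y) = v * min (k' / k) 1 - phi_inv0 g k'"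
        using False by (simp add: utility_def f_opt_def p_opt_def xv yv)
      also have "\<dots> \<le> (if v \<le> phi_inv0 g k then 0 else v - phi_inv0 g k)"
        by (rule ic_core) (use k k' mon[OF k(1) k'] mon2[OF k(1) k'] in auto)
      finally show "utility x (f_opt g y) (p_opt g y) \<le> (if fst x \<le> phi_inv0 g (snd x) then 0 else fst x - phi_inv0 g (snd x))"
        by (simp only: xv fst_conv snd_conv)
    qed
  qed
qed



lemma sconc_cong:
  assumes "strictly_concave_on S h" "\<And>x. x \<in> S \<Longrightarrow> h x = h' x"
  shows "strictly_concave_on S h'"
  unfolding strictly_concave_on_def
proof (intro conjI ballI allI impI)
  show "convex S" using assms(1) by (simp add: strictly_concave_on_def)
  fix x y t :: real assume xy: "x \<in> S" "y \<in> S" and t: "x \<noteq> y \<and> 0 < t \<and> t < 1"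
  have "t *\<^sub>R x + (1 - t) *\<^sub>R y \<in> S"
    using \<open>convex S\<close> xy t by (intro convexD) auto
  then have m: "t * x + (1 - t) * y \<in> S" by simp
  show "t * h' x + (1 - t) * h' y < h' (t * x + (1 - t) * y)"
    using assms(1) xy t m assms(2) unfolding strictly_concave_on_def by metis
qed

lemma kfacts:
  assumes dens: "is_density g" and A: "conditionA g" and k: "k \<in> {0<..1}"
  shows "continuous_on {0..1} (\<lambda>u. g (u, k))"
    and "\<And>u. u \<in> {0..1} \<Longrightarrow> 0 < g (u, k)"
    and "phi_inv0 g k \<in> {0<..<1}"
    and "\<And>s. s \<in> {0..1} \<Longrightarrow> s * integral {s..1} (\<lambda>u. g (u, k))
            \<le> phi_inv0 g k * integral {phi_inv0 g k..1} (\<lambda>u. g (u, k))"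
proof -
  define fk where "fk u = g (u, k)" for u
  have gc: "continuous_on typespace g" and gpos: "\<And>x. x \<in> typespace \<Longrightarrow> 0 < g x"
    using dens by (auto simp: is_density_def)
  have fc: "continuous_on {0..1} fk"
    unfolding fk_def
    by (rule continuous_on_compose2[OF gc]) (use k in \<open>auto intro!: continuous_intros simp: typespace_def\<close>)
  then show "continuous_on {0..1} (\<lambda>u. g (u, k))" by (simp add: fk_def)
  have fpos: "\<And>u. u \<in> {0..1} \<Longrightarrow> 0 < fk u" using gpos k by (auto simp: fk_def typespace_def)
  then show "\<And>u. u \<in> {0..1} \<Longrightarrow> 0 < g (u, k)" by (simp add: fk_def)
  have lint: "(LINT u:{0..v}|lborel. g (u, k)) = integral {0..v} fk" if "v \<in> {0..1}" for v
  proof -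
    have "continuous_on {0..v} fk" by (rule continuous_on_subset[OF fc]) (use that in auto)
    then have "set_integrable lborel {0..v} fk"
      unfolding set_integrable_def by (rule borel_integrable_compact[OF compact_Icc])
    from set_borel_integral_eq_integral(2)[OF this] show ?thesis by (simp add: fk_def)
  qed
  define M where "M = integral {0..1} fk"
  have marg: "marg_k g k = M" unfolding marg_k_def M_def using lint[of 1] by simp
  have cdf: "cond_cdf g v k = integral {0..v} fk / M" if "v \<in> {0..1}" for v
    unfolding cond_cdf_def marg lint[OF that] ..
  have conc: "strictly_concave_on {0..1} (\<lambda>v. v * (1 - integral {0..v} fk / M))"
    by (rule sconc_cong[where h = "\<lambda>v. v * (1 - cond_cdf g v k)"]) (use A k cdf in \<open>auto simp: conditionA_def\<close>)
  have ph: "\<And>v. v \<in> {0..1} \<Longrightarrow> phi g v k = v - (1 - integral {0..v} fk / M) / (fk v / M)"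
    by (simp add: phi_def cdf cond_dens_def marg fk_def)
  obtain r where r: "r \<in> {0<..<1}" "phi g r k = 0" "\<And>r'. r' \<in> {0<..<1} \<and> phi g r' k = 0 \<Longrightarrow> r' = r"
     "\<And>s. s \<in> {0..1} \<Longrightarrow> s * integral {s..1} fk \<le> r * integral {r..1} fk"
    using monopoly[OF fc fpos M_def conc ph] by blast
  have "phi_inv0 g k = r"
    unfolding phi_inv0_def by (rule the_equality) (use r in auto)
  then show "phi_inv0 g k \<in> {0<..<1}"
    "\<And>s. s \<in> {0..1} \<Longrightarrow> s * integral {s..1} (\<lambda>u. g (u, k))
            \<le> phi_inv0 g k * integral {phi_inv0 g k..1} (\<lambda>u. g (u, k))"
    using r unfolding fk_def by auto
qed



lemma slice_step:
  assumes dens: "is_density g" and B: "conditionB g"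
    and feas: "feasible f" and ic: "IC f p" and ir: "IR f p" and k: "k \<in> {0<..1}"
    and int1: "integrable lborel (\<lambda>v. indicator {0..1} v *\<^sub>R (p (v, k) * g (v, k)))"
    and int2: "integrable lborel (\<lambda>v. indicator {0..1} v *\<^sub>R (p_opt g (v, k) * g (v, k)))"
  shows "(LINT v|lborel. indicator {0..1} v *\<^sub>R (p (v, k) * g (v, k)))
       \<le> (LINT v|lborel. indicator {0..1} v *\<^sub>R (p_opt g (v, k) * g (v, k)))"
proof -
  have A: "conditionA g" using B by (simp add: conditionB_def)
  note kf = kfacts[OF dens A k]
  define r where "r = phi_inv0 g k"
  define fk where "fk = (\<lambda>u. g (u, k))"
  define q where "q w = min (fst (f (w, k)) / k) (snd (f (w, k)))" for w
  have e1: "(LINT v|lborel. indicator {0..1} v *\<^sub>R (p (v, k) * g (v, k))) = integral {0..1} (\<lambda>v. p (v, k) * fk v)"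
    and i1: "(\<lambda>v. p (v, k) * fk v) integrable_on {0..1}"
    using set_borel_integral_eq_integral[of "{0..1}" "\<lambda>v. p (v, k) * g (v, k)"] int1
    by (auto simp: set_integrable_def set_lebesgue_integral_def fk_def)
  have e2: "(LINT v|lborel. indicator {0..1} v *\<^sub>R (p_opt g (v, k) * g (v, k))) = integral {0..1} (\<lambda>v. p_opt g (v, k) * fk v)"
    using set_borel_integral_eq_integral[of "{0..1}" "\<lambda>v. p_opt g (v, k) * g (v, k)"] int2
    by (auto simp: set_integrable_def set_lebesgue_integral_def fk_def)
  have r01: "r \<in> {0<..<1}" using kf(3) by (simp add: r_def)
  have "integral {0..1} (\<lambda>v. p_opt g (v, k) * fk v) = integral {0..1} (\<lambda>v. if v \<in> {r..1} then r * fk v else 0)"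
    by (rule integral_spike[OF negligible_sing[of r]]) (auto simp: p_opt_def r_def)
  also have "\<dots> = integral {r..1} (\<lambda>v. r * fk v)"
    unfolding integral_restrict_Int using r01 by (simp add: Int_absorb2)
  also have "\<dots> = r * integral {r..1} fk" by (rule integral_mult_right)
  finally have e3: "integral {0..1} (\<lambda>v. p_opt g (v, k) * fk v) = r * integral {r..1} fk" .
  have "integral {0..1} (\<lambda>v. p (v, k) * fk v) \<le> r * integral {r..1} fk"
  proof (rule slice_bound[where q = q])
    show "continuous_on {0..1} fk" using kf(1) by (simp add: fk_def)
    show "\<And>v. v \<in> {0..1} \<Longrightarrow> 0 \<le> fk v" using kf(2) by (simp add: fk_def less_imp_le)
    show "\<And>s. s \<in> {0..1} \<Longrightarrow> s * integral {s..1} fk \<le> r * integral {r..1} fk"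
      using kf(4) by (simp add: fk_def r_def)
    show "(\<lambda>v. p (v, k) * fk v) integrable_on {0..1}" by (rule i1)
    fix v :: real assume v: "v \<in> {0..1}"
    have tv: "(v, k) \<in> typespace" using v k by (simp add: typespace_def)
    have "fst (f (v, k)) \<in> {0..1}" "snd (f (v, k)) \<in> {0..1}" using feas tv by (auto simp: feasible_def)
    then have "0 \<le> fst (f (v, k)) / k" "0 \<le> snd (f (v, k))" "snd (f (v, k)) \<le> 1" using k by auto
    then show "0 \<le> q v \<and> q v \<le> 1" unfolding q_def by (auto simp: min_def)
    fix w :: real assume w: "w \<in> {0..1}"
    have tw: "(w, k) \<in> typespace" using w k by (simp add: typespace_def)
    show "v * q w - p (w, k) \<le> v * q v - p (v, k)"
      using ic tv tw unfolding IC_def utility_def q_def by auto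
  next
    have "(0::real, k) \<in> typespace" using k by (simp add: typespace_def)
    then show "p (0, k) \<le> 0" using ir unfolding IR_def utility_def by fastforce
  qed
  then show ?thesis using e1 e2 e3 by simp
qed

theorem theorem1:
  fixes g :: "real \<times> real \<Rightarrow> real"
  assumes "is_density g"
    and "conditionB g"
  shows "feasible (f_opt g) \<and> IC (f_opt g) (p_opt g) \<and> IR (f_opt g) (p_opt g)
    \<and> set_integrable lborel typespace (\<lambda>x. p_opt g x * g x)
    \<and> (\<forall>f p. feasible f \<and> IC f p \<and> IR f p \<and> set_integrable lborel typespace (\<lambda>x. p x * g x)
           \<longrightarrow> revenue g p \<le> revenue g (p_opt g))"
proof -
  note dens = assms(1) and B = assms(2)
  have A: "conditionA g" using B by (simp add: conditionB_def)
  have rin: "\<And>k. k \<in> {0<..1} \<Longrightarrow> phi_inv0 g k \<in> {0<..<1}"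
    using kfacts(3)[OF dens A] by blast
  define \<rho> where "\<rho> k = (if k \<in> {0<..1} then phi_inv0 g k else 0)" for k :: real
  have mono: "mono_on {0<..1} (phi_inv0 g)"
  proof (rule mono_onI)
    fix r s :: real assume "r \<in> {0<..1}" "s \<in> {0<..1}" "r \<le> s"
    then show "phi_inv0 g r \<le> phi_inv0 g s"
      using B unfolding conditionB_def by (cases "r = s") auto
  qed
  have \<rho>m[measurable]: "\<rho> \<in> borel_measurable borel"
    using borel_measurable_mono_on_fnc[OF mono]
      measurable_restrict_space_iff[of "{0<..1}" borel 0 borel "phi_inv0 g"]
    by (simp add: \<rho>_def[abs_def])
  define P where "P x = indicator typespace x * (if fst x \<le> \<rho> (snd x) then 0 else \<rho> (snd x))" for x :: "real \<times> real"
  have Pm0: "P \<in> borel_measurable (borel \<Otimes>\<^sub>M borel)"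
    unfolding P_def typespace_def by measurable
  have Pm: "P \<in> borel_measurable lborel"
    using Pm0 by (simp add: borel_prod measurable_lborel1)
  have Gint: "integrable lborel (\<lambda>x. indicator typespace x *\<^sub>R g x)"
    using dens by (simp add: is_density_def set_integrable_def)
  have H2eq: "(\<lambda>x. indicator typespace x *\<^sub>R (p_opt g x * g x)) = (\<lambda>x. P x * (indicator typespace x *\<^sub>R g x))"
    by (auto simp: P_def \<rho>_def p_opt_def typespace_def indicator_def fun_eq_iff)
  have int2: "set_integrable lborel typespace (\<lambda>x. p_opt g x * g x)"
    unfolding set_integrable_def H2eq
  proof (rule Bochner_Integration.integrable_bound[OF Gint])
    show "(\<lambda>x. P x * (indicator typespace x *\<^sub>R g x)) \<in> borel_measurable lborel"
      by (intro borel_measurable_times Pm borel_measurable_integrable[OF Gint])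
    show "AE x in lborel. norm (P x * (indicator typespace x *\<^sub>R g x)) \<le> norm (indicator typespace x *\<^sub>R g x)"
    proof (rule AE_I2)
      fix x :: "real \<times> real"
      have "\<bar>P x\<bar> \<le> 1"
      proof (cases "x \<in> typespace")
        case True
        then have "snd x \<in> {0<..1}" by (auto simp: typespace_def mem_Times_iff)
        then have "\<rho> (snd x) \<in> {0<..<1}" using rin by (simp add: \<rho>_def)
        then show ?thesis using True by (auto simp: P_def)
      qed (simp add: P_def)
      then have "\<bar>P x\<bar> * \<bar>indicator typespace x * g x\<bar> \<le> 1 * \<bar>indicator typespace x * g x\<bar>"
        by (intro mult_right_mono) auto
      then show "norm (P x * (indicator typespace x *\<^sub>R g x)) \<le> norm (indicator typespace x *\<^sub>R g x)"
        by (simp add: abs_mult)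
    qed
  qed
  have opt: "feasible (f_opt g) \<and> IC (f_opt g) (p_opt g) \<and> IR (f_opt g) (p_opt g)"
    by (rule opt_IC_IR[OF B])
  have rev: "revenue g p \<le> revenue g (p_opt g)"
    if hyp: "feasible f" "IC f p" "IR f p" "set_integrable lborel typespace (\<lambda>x. p x * g x)" for f p
  proof -

    define H1 where "H1 = (\<lambda>x. indicator typespace x *\<^sub>R (p x * g x))"
    define H2 where "H2 = (\<lambda>x. indicator typespace x *\<^sub>R (p_opt g x * g x))"
    have ce: "\<And>H::real\<times>real\<Rightarrow>real. (\<lambda>(v, k). H (v, k)) = H" by auto
    have I1: "integrable (lborel \<Otimes>\<^sub>M lborel) (\<lambda>(v, k). H1 (v, k))"
      unfolding ce using hyp(4) by (simp add: set_integrable_def H1_def lborel_prod)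
    have I2: "integrable (lborel \<Otimes>\<^sub>M lborel) (\<lambda>(v, k). H2 (v, k))"
      unfolding ce using int2 by (simp add: set_integrable_def H2_def lborel_prod)
    have r1: "revenue g p = (\<integral>k. (\<integral>v. H1 (v, k) \<partial>lborel) \<partial>lborel)"
      unfolding lborel_pair.integral_snd[OF I1] ce by (simp add: revenue_def set_lebesgue_integral_def H1_def lborel_prod)
    have r2: "revenue g (p_opt g) = (\<integral>k. (\<integral>v. H2 (v, k) \<partial>lborel) \<partial>lborel)"
      unfolding lborel_pair.integral_snd[OF I2] ce by (simp add: revenue_def set_lebesgue_integral_def H2_def lborel_prod)
    have "(\<integral>k. (\<integral>v. H1 (v, k) \<partial>lborel) \<partial>lborel) \<le> (\<integral>k. (\<integral>v. H2 (v, k) \<partial>lborel) \<partial>lborel)"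
    proof (rule integral_mono_AE[OF lborel_pair.integrable_snd[OF I1] lborel_pair.integrable_snd[OF I2]])
      show "AE k in lborel. (\<integral>v. H1 (v, k) \<partial>lborel) \<le> (\<integral>v. H2 (v, k) \<partial>lborel)"
        using lborel_pair.AE_integrable_snd[OF I1] lborel_pair.AE_integrable_snd[OF I2]
      proof eventually_elim
        case (elim k)
        show ?case
        proof (cases "k \<in> {0<..1}")
          case True
          have e1: "(\<lambda>v. H1 (v, k)) = (\<lambda>v. indicator {0..1} v *\<^sub>R (p (v, k) * g (v, k)))"
            using True by (auto simp: H1_def typespace_def indicator_def fun_eq_iff)
          have e2: "(\<lambda>v. H2 (v, k)) = (\<lambda>v. indicator {0..1} v *\<^sub>R (p_opt g (v, k) * g (v, k)))"
            using True by (auto simp: H2_def typespace_def indicator_def fun_eq_iff)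
          show ?thesis unfolding e1 e2
            by (rule slice_step[OF dens B hyp(1,2,3) True]) (use elim e1 e2 in auto)
        next
          case False
          then have "\<And>v. H1 (v, k) = 0" "\<And>v. H2 (v, k) = 0"
            by (auto simp: H1_def H2_def typespace_def)
          then show ?thesis by simp
        qed
      qed
    qed
    then show ?thesis using r1 r2 by simp
  qed
  show ?thesis using opt int2 rev by blast
qed


end
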